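(* Let $G$ be one of the sequent calculi $\mathbf{GE},\mathbf{GM},\mathbf{GMC},\mathbf{GEN},\mathbf{GMN},\mathbf{GK},\mathbf{GEC},\mathbf{GECN},\mathbf{GCE},\mathbf{GCM},\mathbf{GCMC},\mathbf{GCEN},\mathbf{GCMN},\mathbf{GCK},\mathbf{GCKID},\mathbf{GCKCEM},\mathbf{GCKCEMID}$, and let $L=\{\phi : G\vdash\ \Rightarrow\phi\}$ be its logic. Then $G$ has ULIP iff $L$ has ULIP, and $G$ has UIP iff $L$ has UIP.
   Context: Languages: $\mathcal{L}_\Box$ (atoms, $\bot$, $\wedge,\vee,\to$, unary $\Box$) for the calculi whose name does not start with $\mathbf{GC}$, and $\mathcal{L}_\triangleright$ (atoms, $\bot$, $\wedge,\vee,\to$, binary $\triangleright$) otherwise. $\top:=\bot\to\bot$, $\neg A:=A\to\bot$. Positive/negative variables: $V^+(p)=\{p\}$, $V^-(p)=\varnothing$; $V^\pm(\bot)=\varnothing$; $V^\pm(\phi\odot\psi)=V^\pm(\phi)\cup V^\pm(\psi)$ for $\odot\in\{\wedge,\vee\}$; $V^+(\phi\to\psi)=V^-(\phi)\cup V^+(\psi)$, $V^-(\phi\to\psi)=V^+(\phi)\cup V^-(\psi)$; $V^\pm(\Box\phi)=V^\pm(\phi)$; $V^+(\phi\triangleright\psi)=V^-(\phi)\cup V^+(\psi)$, $V^-(\phi\triangleright\psi)=V^+(\phi)\cup V^-(\psi)$; $V=V^+\cup V^-$. $p^\circ$-free means $p\notin V^\circ$; $\diamond$ is the sign opposite to $\circ\in\{+,-\}$.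 Sequents $S=\Gamma\Rightarrow\Delta$ ($\Gamma,\Delta$ finite multisets); $V^+(S)=\bigcup_{\gamma\in\Gamma}V^-(\gamma)\cup\bigcup_{\delta\in\Delta}V^+(\delta)$, $V^-(S)=\bigcup_{\gamma\in\Gamma}V^+(\gamma)\cup\bigcup_{\delta\in\Delta}V^-(\delta)$; for $S=(\Gamma\Rightarrow\Delta)$, $T=(\Pi\Rightarrow\Lambda)$, $S\cdot T=(\Gamma,\Pi\Rightarrow\Delta,\Lambda)$. $G$ has ULIP if for every sequent $S$, atom $p$, $\circ\in\{+,-\}$ there is a $p^\circ$-free formula $\theta$ with $V^\dagger(\theta)\subseteq V^\dagger(S)$ for both $\dagger$, $G\vdash S\cdot(\theta\Rightarrow)$, and for every sequent $\Gamma\Rightarrow\Delta$ with $p\notin V^\diamond(\Gamma\Rightarrow\Delta)$, $G\vdash S\cdot(\Gamma\Rightarrow\Delta)$ implies $G\vdash\Gamma\Rightarrow\theta,\Delta$. UIP for $G$: same without polarities ($\theta$ $p$-free, $V(\theta)\subseteq V(S)$, $\Gamma\Rightarrow\Delta$ with $p\notin V(\Gamma\Rightarrow\Delta)$). ULIP for a logic $L$: for every formula $\phi$, atom $p$, $\circ$, there are $p^\circ$-free $\forall^\circ p\,\phi$, $\exists^\circ p\,\phi$ with $V^\dagger(\cdot)\subseteq V^\dagger(\phi)$ such that $L\vdash\forall^\circ p\,\phi\to\phi$; for $p^\circ$-free $\psi$, $L\vdash\psi\to\phi$ implies $L\vdash\psi\to\forall^\circ p\,\phi$; $L\vdash\phi\to\exists^\circ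 p\,\phi$; for $p^\circ$-free $\psi$, $L\vdash\phi\to\psi$ implies $L\vdash\exists^\circ p\,\phi\to\psi$. UIP for $L$: same without polarities. Calculi: $\mathbf{G3cp}$ has axioms $\Gamma,p\Rightarrow p,\Delta$ ($p$ atomic), $\Gamma,\bot\Rightarrow\Delta$ and the standard invertible context-sharing rules $L\wedge,R\wedge,L\vee,R\vee,L\to,R\to$ (e.g. $L\to$: from $\Gamma\Rightarrow\phi,\Delta$ and $\Gamma,\psi\Rightarrow\Delta$ infer $\Gamma,\phi\to\psi\Rightarrow\Delta$; $R\to$: from $\Gamma,\phi\Rightarrow\psi,\Delta$ infer $\Gamma\Rightarrow\phi\to\psi,\Delta$; $R\vee$: from $\Gamma\Rightarrow\phi,\psi,\Delta$ infer $\Gamma\Rightarrow\phi\vee\psi,\Delta$; $L\wedge$ dually; $R\wedge$, $L\vee$ two-premise). $\mathbf{G3W}=\mathbf{G3cp}$ plus left and right weakening. "$\alpha\Leftrightarrow\beta$" as a premise abbreviates $\alpha\Rightarrow\beta$ and $\beta\Rightarrow\alpha$. Modal rules: $(E)$ from $\phi\Leftrightarrow\psi$ infer $\Box\phi\Rightarrow\Box\psi$; $(M)$ from $\phi\Rightarrow\psi$ infer $\Box\phi\Rightarrow\Box\psi$; $(MC)$ ($n\ge1$) from $\phi_1,\dots,\phi_n\Rightarrow\psi$ infer $\Box\phi_1,\dots,\Box\phi_n\Rightarrow\Box\psi$; $(N)$ from $\Rightarrow\psi$ infer $\Rightarrow\Box\psi$; $(EC)$ ($n\ge1$) from $\phi_1,\dots,\phi_n\Rightarrow\psi$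 and $\psi\Rightarrow\phi_i$ ($1\le i\le n$) infer $\Sigma,\Box\phi_1,\dots,\Box\phi_n\Rightarrow\Box\psi,\Lambda$; $(NW)$ from $\Rightarrow\psi$ infer $\Sigma\Rightarrow\Box\psi,\Lambda$. $\mathbf{GE},\mathbf{GM},\mathbf{GMC}$ = $\mathbf{G3W}$ + $(E)$, $(M)$, $(MC)$; $\mathbf{GEN},\mathbf{GMN},\mathbf{GK}$ = these + $(N)$; $\mathbf{GEC}=\mathbf{G3cp}+(EC)$, $\mathbf{GECN}=\mathbf{GEC}+(NW)$. Conditional rules: $(CE)$ from $\phi_0\Leftrightarrow\phi_1$, $\psi_0\Leftrightarrow\psi_1$ infer $\phi_1\triangleright\psi_1\Rightarrow\phi_0\triangleright\psi_0$; $(CM)$ from $\phi_0\Leftrightarrow\phi_1$, $\psi_1\Rightarrow\psi_0$ infer the same; $(CMC)$ ($n\ge1$) from $\phi_0\Leftrightarrow\phi_i$ ($1\le i\le n$), $\psi_1,\dots,\psi_n\Rightarrow\psi_0$ infer $\phi_1\triangleright\psi_1,\dots,\phi_n\triangleright\psi_n\Rightarrow\phi_0\triangleright\psi_0$; $(CN)$ from $\Rightarrow\psi_0$ infer $\Rightarrow\phi_0\triangleright\psi_0$; $(CKID)$ ($I$ a possibly empty finite index multiset) from $\phi_0\Leftrightarrow\phi_i$ ($i\in I$), $\phi_0,\{\psi_i\}_{i\in I}\Rightarrow\psi_0$ infer $\{\phi_i\triangleright\psi_i\}_{i\in I}\Rightarrow\phi_0\triangleright\psi_0$; $(CKCEM)$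 from $\phi_0\Leftrightarrow\phi_r$ ($r\in I\cup J$), $\{\psi_i\}_{i\in I}\Rightarrow\psi_0,\{\psi_j\}_{j\in J}$ infer $\{\phi_i\triangleright\psi_i\}_{i\in I}\Rightarrow\phi_0\triangleright\psi_0,\{\phi_j\triangleright\psi_j\}_{j\in J}$; $(CKCEMID)$ as $(CKCEM)$ but with $\phi_0$ added to the antecedent of the last premise. $\mathbf{GCE},\mathbf{GCM},\mathbf{GCMC},\mathbf{GCKID},\mathbf{GCKCEM},\mathbf{GCKCEMID}$ = $\mathbf{G3W}$ + $(CE)$, $(CM)$, $(CMC)$, $(CKID)$, $(CKCEM)$, $(CKCEMID)$; $\mathbf{GCEN},\mathbf{GCMN},\mathbf{GCK}$ = $\mathbf{GCE},\mathbf{GCM},\mathbf{GCMC}$ + $(CN)$. Each $L$ so defined is a logic (contains classical tautologies, closed under substitution and modus ponens). *)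

theory Defs
  imports Main "HOL-Library.Multiset"
begin

text \<open>One datatype carrying both the unary modality Box and the binary conditional Cond;
  each calculus only uses the formulas of its own language (predicate inL).\<close>

datatype fm = Atom nat | Bot | FAnd fm fm | FOr fm fm | FImp fm fm | Box fm | Cond fm fm

datatype pol = Pos | Neg

fun opp :: "pol \<Rightarrow> pol" where
  "opp Pos = Neg" | "opp Neg = Pos"

fun pvars :: "pol \<Rightarrow> fm \<Rightarrow> nat set" where
  "pvars Pos (Atom p) = {p}"
| "pvars Neg (Atom p) = {}"
| "pvars s Bot = {}"
| "pvars s (FAnd a b) = pvars s a \<union> pvars s b"
| "pvars s (FOr a b) = pvars s a \<union> pvars s b"
| "pvars s (FImp a b) = pvars (opp s) a \<union> pvars s b"
| "pvars s (Box a) = pvars s a"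
| "pvars s (Cond a b) = pvars (opp s) a \<union> pvars s b"

definition allvars :: "fm \<Rightarrow> nat set" where
  "allvars a = pvars Pos a \<union> pvars Neg a"

type_synonym seq = "fm multiset \<times> fm multiset"

definition spvars :: "pol \<Rightarrow> seq \<Rightarrow> nat set" where
  "spvars s S = (\<Union>g\<in>set_mset (fst S). pvars (opp s) g) \<union> (\<Union>d\<in>set_mset (snd S). pvars s d)"

definition sallvars :: "seq \<Rightarrow> nat set" where
  "sallvars S = spvars Pos S \<union> spvars Neg S"

definition sdot :: "seq \<Rightarrow> seq \<Rightarrow> seq" where
  "sdot S T = (fst S + fst T, snd S + snd T)"

datatype calc = GE | GM | GMC | GEN | GMN | GK | GEC | GECN
  | GCE | GCM | GCMC | GCEN | GCMN | GCK | GCKID | GCKCEM | GCKCEMID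

definition is_cond_calc :: "calc \<Rightarrow> bool" where
  "is_cond_calc c \<longleftrightarrow> c \<in> {GCE, GCM, GCMC, GCEN, GCMN, GCK, GCKID, GCKCEM, GCKCEMID}"

fun inLang :: "bool \<Rightarrow> fm \<Rightarrow> bool" where
  "inLang b (Atom p) = True"
| "inLang b Bot = True"
| "inLang b (FAnd x y) = (inLang b x \<and> inLang b y)"
| "inLang b (FOr x y) = (inLang b x \<and> inLang b y)"
| "inLang b (FImp x y) = (inLang b x \<and> inLang b y)"
| "inLang b (Box x) = (\<not> b \<and> inLang b x)"
| "inLang b (Cond x y) = (b \<and> inLang b x \<and> inLang b y)"

definition inL :: "calc \<Rightarrow> fm \<Rightarrow> bool" where
  "inL c a = inLang (is_cond_calc c) a"

definition seqL :: "calc \<Rightarrow> seq \<Rightarrow> bool" where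
  "seqL c S \<longleftrightarrow> (\<forall>a\<in>set_mset (fst S) \<union> set_mset (snd S). inL c a)"

definition condf :: "fm \<times> fm \<Rightarrow> fm" where
  "condf x = Cond (fst x) (snd x)"

inductive deriv :: "calc \<Rightarrow> seq \<Rightarrow> bool" for c :: calc where
  ax_atom: "deriv c (\<Gamma> + {#Atom p#}, {#Atom p#} + \<Delta>)"
| ax_bot: "deriv c (\<Gamma> + {#Bot#}, \<Delta>)"
| L_and: "deriv c (\<Gamma> + {#a, b#}, \<Delta>) \<Longrightarrow> deriv c (\<Gamma> + {#FAnd a b#}, \<Delta>)"
| R_and: "deriv c (\<Gamma>, {#a#} + \<Delta>) \<Longrightarrow> deriv c (\<Gamma>, {#b#} + \<Delta>) \<Longrightarrow> deriv c (\<Gamma>, {#FAnd a b#} + \<Delta>)"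
| L_or: "deriv c (\<Gamma> + {#a#}, \<Delta>) \<Longrightarrow> deriv c (\<Gamma> + {#b#}, \<Delta>) \<Longrightarrow> deriv c (\<Gamma> + {#FOr a b#}, \<Delta>)"
| R_or: "deriv c (\<Gamma>, {#a, b#} + \<Delta>) \<Longrightarrow> deriv c (\<Gamma>, {#FOr a b#} + \<Delta>)"
| L_imp: "deriv c (\<Gamma>, {#a#} + \<Delta>) \<Longrightarrow> deriv c (\<Gamma> + {#b#}, \<Delta>) \<Longrightarrow> deriv c (\<Gamma> + {#FImp a b#}, \<Delta>)"
| R_imp: "deriv c (\<Gamma> + {#a#}, {#b#} + \<Delta>) \<Longrightarrow> deriv c (\<Gamma>, {#FImp a b#} + \<Delta>)"
| LW: "c \<notin> {GEC, GECN} \<Longrightarrow> deriv c (\<Gamma>, \<Delta>) \<Longrightarrow> deriv c (\<Gamma> + {#a#}, \<Delta>)"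
| RW: "c \<notin> {GEC, GECN} \<Longrightarrow> deriv c (\<Gamma>, \<Delta>) \<Longrightarrow> deriv c (\<Gamma>, {#a#} + \<Delta>)"
| rE: "c \<in> {GE, GEN} \<Longrightarrow> deriv c ({#a#}, {#b#}) \<Longrightarrow> deriv c ({#b#}, {#a#})
        \<Longrightarrow> deriv c ({#Box a#}, {#Box b#})"
| rM: "c \<in> {GM, GMN} \<Longrightarrow> deriv c ({#a#}, {#b#}) \<Longrightarrow> deriv c ({#Box a#}, {#Box b#})"
| rMC: "c \<in> {GMC, GK} \<Longrightarrow> phis \<noteq> [] \<Longrightarrow> deriv c (mset phis, {#b#})
        \<Longrightarrow> deriv c (mset (map Box phis), {#Box b#})"
| rN: "c \<in> {GEN, GMN, GK} \<Longrightarrow> deriv c ({#}, {#b#}) \<Longrightarrow> deriv c ({#}, {#Box b#})"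
| rEC: "c \<in> {GEC, GECN} \<Longrightarrow> phis \<noteq> [] \<Longrightarrow> deriv c (mset phis, {#b#})
        \<Longrightarrow> (\<forall>a\<in>set phis. deriv c ({#b#}, {#a#}))
        \<Longrightarrow> deriv c (\<Sigma> + mset (map Box phis), {#Box b#} + \<Lambda>)"
| rNW: "c = GECN \<Longrightarrow> deriv c ({#}, {#b#}) \<Longrightarrow> deriv c (\<Sigma>, {#Box b#} + \<Lambda>)"
| rCE: "c \<in> {GCE, GCEN} \<Longrightarrow> deriv c ({#a0#}, {#a1#}) \<Longrightarrow> deriv c ({#a1#}, {#a0#})
        \<Longrightarrow> deriv c ({#b0#}, {#b1#}) \<Longrightarrow> deriv c ({#b1#}, {#b0#})
        \<Longrightarrow> deriv c ({#Cond a1 b1#}, {#Cond a0 b0#})"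
| rCM: "c \<in> {GCM, GCMN} \<Longrightarrow> deriv c ({#a0#}, {#a1#}) \<Longrightarrow> deriv c ({#a1#}, {#a0#})
        \<Longrightarrow> deriv c ({#b1#}, {#b0#})
        \<Longrightarrow> deriv c ({#Cond a1 b1#}, {#Cond a0 b0#})"
| rCMC: "c \<in> {GCMC, GCK} \<Longrightarrow> ps \<noteq> []
        \<Longrightarrow> (\<forall>x\<in>set ps. deriv c ({#a0#}, {#fst x#}) \<and> deriv c ({#fst x#}, {#a0#}))
        \<Longrightarrow> deriv c (mset (map snd ps), {#b0#})
        \<Longrightarrow> deriv c (mset (map condf ps), {#Cond a0 b0#})"
| rCN: "c \<in> {GCEN, GCMN, GCK} \<Longrightarrow> deriv c ({#}, {#b0#}) \<Longrightarrow> deriv c ({#}, {#Cond a0 b0#})"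
| rCKID: "c = GCKID
        \<Longrightarrow> (\<forall>x\<in>set ps. deriv c ({#a0#}, {#fst x#}) \<and> deriv c ({#fst x#}, {#a0#}))
        \<Longrightarrow> deriv c ({#a0#} + mset (map snd ps), {#b0#})
        \<Longrightarrow> deriv c (mset (map condf ps), {#Cond a0 b0#})"
| rCKCEM: "c = GCKCEM
        \<Longrightarrow> (\<forall>x\<in>set (ps @ qs). deriv c ({#a0#}, {#fst x#}) \<and> deriv c ({#fst x#}, {#a0#}))
        \<Longrightarrow> deriv c (mset (map snd ps), {#b0#} + mset (map snd qs))
        \<Longrightarrow> deriv c (mset (map condf ps), {#Cond a0 b0#} + mset (map condf qs))"
| rCKCEMID: "c = GCKCEMID
        \<Longrightarrow> (\<forall>x\<in>set (ps @ qs). deriv c ({#a0#}, {#fst x#}) \<and> deriv c ({#fst x#}, {#a0#}))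
        \<Longrightarrow> deriv c ({#a0#} + mset (map snd ps), {#b0#} + mset (map snd qs))
        \<Longrightarrow> deriv c (mset (map condf ps), {#Cond a0 b0#} + mset (map condf qs))"

definition ULIP_calc :: "calc \<Rightarrow> bool" where
  "ULIP_calc c \<longleftrightarrow> (\<forall>S p s. seqL c S \<longrightarrow> (\<exists>\<theta>. inL c \<theta> \<and> p \<notin> pvars s \<theta>
     \<and> (\<forall>t. pvars t \<theta> \<subseteq> spvars t S)
     \<and> deriv c (sdot S ({#\<theta>#}, {#}))
     \<and> (\<forall>\<Gamma> \<Delta>. seqL c (\<Gamma>, \<Delta>) \<longrightarrow> p \<notin> spvars (opp s) (\<Gamma>, \<Delta>)
          \<longrightarrow> deriv c (sdot S (\<Gamma>, \<Delta>)) \<longrightarrow> deriv c (\<Gamma>, {#\<theta>#} + \<Delta>))))"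

definition UIP_calc :: "calc \<Rightarrow> bool" where
  "UIP_calc c \<longleftrightarrow> (\<forall>S p. seqL c S \<longrightarrow> (\<exists>\<theta>. inL c \<theta> \<and> p \<notin> allvars \<theta>
     \<and> allvars \<theta> \<subseteq> sallvars S
     \<and> deriv c (sdot S ({#\<theta>#}, {#}))
     \<and> (\<forall>\<Gamma> \<Delta>. seqL c (\<Gamma>, \<Delta>) \<longrightarrow> p \<notin> sallvars (\<Gamma>, \<Delta>)
          \<longrightarrow> deriv c (sdot S (\<Gamma>, \<Delta>)) \<longrightarrow> deriv c (\<Gamma>, {#\<theta>#} + \<Delta>))))"

definition logic :: "calc \<Rightarrow> fm set" where
  "logic c = {a. inL c a \<and> deriv c ({#}, {#a#})}"

definition ULIP_logic :: "calc \<Rightarrow> bool" where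
  "ULIP_logic c \<longleftrightarrow> (\<forall>\<phi> p s. inL c \<phi> \<longrightarrow> (\<exists>A E.
     inL c A \<and> inL c E \<and> p \<notin> pvars s A \<and> p \<notin> pvars s E
     \<and> (\<forall>t. pvars t A \<subseteq> pvars t \<phi>) \<and> (\<forall>t. pvars t E \<subseteq> pvars t \<phi>)
     \<and> FImp A \<phi> \<in> logic c
     \<and> (\<forall>\<psi>. inL c \<psi> \<longrightarrow> p \<notin> pvars s \<psi> \<longrightarrow> FImp \<psi> \<phi> \<in> logic c \<longrightarrow> FImp \<psi> A \<in> logic c)
     \<and> FImp \<phi> E \<in> logic c
     \<and> (\<forall>\<psi>. inL c \<psi> \<longrightarrow> p \<notin> pvars s \<psi> \<longrightarrow> FImp \<phi> \<psi> \<in> logic c \<longrightarrow> FImp E \<psi> \<in> logic c)))"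

definition UIP_logic :: "calc \<Rightarrow> bool" where
  "UIP_logic c \<longleftrightarrow> (\<forall>\<phi> p. inL c \<phi> \<longrightarrow> (\<exists>A E.
     inL c A \<and> inL c E \<and> p \<notin> allvars A \<and> p \<notin> allvars E
     \<and> allvars A \<subseteq> allvars \<phi> \<and> allvars E \<subseteq> allvars \<phi>
     \<and> FImp A \<phi> \<in> logic c
     \<and> (\<forall>\<psi>. inL c \<psi> \<longrightarrow> p \<notin> allvars \<psi> \<longrightarrow> FImp \<psi> \<phi> \<in> logic c \<longrightarrow> FImp \<psi> A \<in> logic c)
     \<and> FImp \<phi> E \<in> logic c
     \<and> (\<forall>\<psi>. inL c \<psi> \<longrightarrow> p \<notin> allvars \<psi> \<longrightarrow> FImp \<phi> \<psi> \<in> logic c \<longrightarrow> FImp E \<psi> \<in> logic c)))"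

end

theory Submission
  imports Defs
begin

lemma deriv_eq: "deriv c X \<Longrightarrow> X = Y \<Longrightarrow> deriv c Y" by simp

lemma Wprim: "c \<notin> {GEC, GECN} \<Longrightarrow> deriv c (G, D) \<Longrightarrow> deriv c (G + A, D + B)"
proof (induction A)
  case empty
  then show ?case
  proof (induction B)
    case empty then show ?case by simp
  next
    case (add x B) then show ?case using deriv.RW[of c G "D+B" x] by (simp add: add.commute)
  qed
next
  case (add x A) then show ?case using deriv.LW[of c "G+A" "D+B" x] by simp
qed

lemma W_ec: "deriv c S \<Longrightarrow> c \<in> {GEC, GECN} \<Longrightarrow> deriv c (fst S + A, snd S + B)"
proof (induction arbitrary: A B rule: deriv.induct)
  case (ax_atom \<Gamma> p \<Delta>)
  then show ?case using deriv.ax_atom[of c "\<Gamma>+A" p "\<Delta>+B"] by (simp add: ac_simps)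
next
  case (ax_bot \<Gamma> \<Delta>)
  then show ?case using deriv.ax_bot[of c "\<Gamma>+A" "\<Delta>+B"] by (simp add: ac_simps)
next
  case (L_and \<Gamma> a b \<Delta>)
  then show ?case using deriv.L_and[of c "\<Gamma>+A" a b "\<Delta>+B"] by (simp add: ac_simps)
next
  case (R_and \<Gamma> a \<Delta> b)
  then show ?case using deriv.R_and[of c "\<Gamma>+A" a "\<Delta>+B" b] by (simp add: ac_simps)
next
  case (L_or \<Gamma> a \<Delta> b)
  then show ?case using deriv.L_or[of c "\<Gamma>+A" a "\<Delta>+B" b] by (simp add: ac_simps)
next
  case (R_or \<Gamma> a b \<Delta>)
  then show ?case using deriv.R_or[of c "\<Gamma>+A" a b "\<Delta>+B"] by (simp add: ac_simps)
next
  case (L_imp \<Gamma> a \<Delta> b)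
  then show ?case using deriv.L_imp[of c "\<Gamma>+A" a "\<Delta>+B" b] by (simp add: ac_simps)
next
  case (R_imp \<Gamma> a b \<Delta>)
  then show ?case using deriv.R_imp[of c "\<Gamma>+A" a b "\<Delta>+B"] by (simp add: ac_simps)
next
  case (rEC phis b \<Sigma> \<Lambda>)
  then show ?case using deriv.rEC[of c phis b "\<Sigma>+A" "\<Lambda>+B"] by (simp add: ac_simps)
next
  case (rNW b \<Sigma> \<Lambda>)
  then show ?case using deriv.rNW[of c b "\<Sigma>+A" "\<Lambda>+B"] by (simp add: ac_simps)
qed auto

lemma W: "deriv c (G, D) \<Longrightarrow> deriv c (G + A, D + B)"
  using Wprim W_ec[of c "(G,D)"] by (cases "c \<in> {GEC, GECN}") auto

lemma add2: "add_mset x M = add_mset y N \<Longrightarrow> x \<noteq> y \<Longrightarrow> \<exists>C. M = add_mset y C \<and> N = add_mset x C"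
  by (auto simp: add_eq_conv_ex)
lemma add_in: "add_mset x M = add_mset y N \<Longrightarrow> x \<noteq> y \<Longrightarrow> y \<in># M"
  by (metis insert_DiffM2 insert_noteq_member)

lemma condf_mem: "x \<in># mset (map condf qs) \<Longrightarrow> \<exists>u v. x = Cond u v"
  by (auto simp: condf_def)

lemma inv_R_gen:
  assumes "deriv c S" "snd S = add_mset F D"
    and nA: "\<And>p. F \<noteq> Atom p" and nB: "\<And>x. F \<noteq> Box x" and nC: "\<And>x y. F \<noteq> Cond x y"
    and hAnd: "\<And>G x y E. F = FAnd x y \<Longrightarrow> deriv c (G, add_mset x E) \<Longrightarrow> deriv c (G, add_mset y E) \<Longrightarrow> deriv c (L + G, R + E)"
    and hOr: "\<And>G x y E. F = FOr x y \<Longrightarrow> deriv c (G, add_mset x (add_mset y E)) \<Longrightarrow> deriv c (L + G, R + E)"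
    and hImp: "\<And>G x y E. F = FImp x y \<Longrightarrow> deriv c (add_mset x G, add_mset y E) \<Longrightarrow> deriv c (L + G, R + E)"
    and hW: "\<And>G E. c \<notin> {GEC, GECN} \<Longrightarrow> deriv c (G, E) \<Longrightarrow> deriv c (L + G, R + E)"
  shows "deriv c (L + fst S, R + D)"
  using assms(1,2)
proof (induction arbitrary: D rule: deriv.induct)
  case (ax_atom \<Gamma> p \<Delta>)
  obtain C where "\<Delta> = add_mset F C" "D = add_mset (Atom p) C" using add2[of "Atom p" \<Delta> F D] ax_atom.prems nA by auto
  then show ?case using deriv.ax_atom[of c "L + \<Gamma>" p "R + C"] by (simp add: add_mset_commute ac_simps)
next
  case (ax_bot \<Gamma> \<Delta>)
  then show ?case using deriv.ax_bot[of c "L + \<Gamma>" "R + D"] by (simp add: add_mset_commute ac_simps)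
next
  case (L_and \<Gamma> x y \<Delta>)
  then show ?case using deriv.L_and[of c "L + \<Gamma>" x y "R + D"] by (simp add: add_mset_commute ac_simps)
next
  case (R_and \<Gamma> x \<Delta> y)
  show ?case
  proof (cases "FAnd x y = F \<and> \<Delta> = D")
    case True then show ?thesis using R_and.hyps hAnd[of x y \<Gamma> \<Delta>] by simp
  next
    case False
    obtain C where C: "\<Delta> = add_mset F C" "D = add_mset (FAnd x y) C"
      using add2[of "FAnd x y" \<Delta> F D] R_and.prems False by (cases "FAnd x y = F") auto
    then show ?thesis using R_and.IH(1)[of "add_mset x C"] R_and.IH(2)[of "add_mset y C"]
       deriv.R_and[of c "L + \<Gamma>" x "R + C" y] by (simp add: add_mset_commute ac_simps)
  qed
next
  case (L_or \<Gamma> x \<Delta> y)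
  then show ?case using deriv.L_or[of c "L + \<Gamma>" x "R + D" y] by (simp add: add_mset_commute ac_simps)
next
  case (R_or \<Gamma> x y \<Delta>)
  show ?case
  proof (cases "FOr x y = F \<and> \<Delta> = D")
    case True then show ?thesis using R_or.hyps hOr[of x y \<Gamma> \<Delta>] by simp
  next
    case False
    obtain C where C: "\<Delta> = add_mset F C" "D = add_mset (FOr x y) C"
      using add2[of "FOr x y" \<Delta> F D] R_or.prems False by (cases "FOr x y = F") auto
    then show ?thesis using R_or.IH[of "add_mset x (add_mset y C)"]
       deriv.R_or[of c "L + \<Gamma>" x y "R + C"] by (simp add: add_mset_commute ac_simps)
  qed
next
  case (L_imp \<Gamma> x \<Delta> y)
  then show ?case using L_imp.IH(1)[of "add_mset x D"] L_imp.IH(2)[of D] 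
    deriv.L_imp[of c "L + \<Gamma>" x "R + D" y] by (simp add: add_mset_commute ac_simps)
next
  case (R_imp \<Gamma> x y \<Delta>)
  show ?case
  proof (cases "FImp x y = F \<and> \<Delta> = D")
    case True then show ?thesis using R_imp.hyps hImp[of x y \<Gamma> \<Delta>] by simp
  next
    case False
    obtain C where C: "\<Delta> = add_mset F C" "D = add_mset (FImp x y) C" 
      using add2[of "FImp x y" \<Delta> F D] R_imp.prems False by (cases "FImp x y = F") auto
    then show ?thesis using R_imp.IH[of "add_mset y C"]
      deriv.R_imp[of c "L + \<Gamma>" x y "R + C"] by (simp add: add_mset_commute ac_simps)
  qed
next
  case (LW \<Gamma> \<Delta> x)
  then show ?case using deriv.LW[of c "L + \<Gamma>" "R + D" x] by (simp add: add_mset_commute ac_simps)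
next
  case (RW \<Gamma> \<Delta> x)
  show ?case
  proof (cases "x = F \<and> \<Delta> = D")
    case True then show ?thesis using RW.hyps hW[of \<Gamma> \<Delta>] by simp
  next
    case False
    obtain C where C: "\<Delta> = add_mset F C" "D = add_mset x C" 
      using add2[of x \<Delta> F D] RW.prems False by (cases "x = F") auto
    then show ?thesis using RW.IH[of C] RW.hyps
      deriv.RW[of c "L + \<Gamma>" "R + C" x] by (simp add: add_mset_commute ac_simps)
  qed
next
  case (rEC phis y \<Sigma> \<Lambda>)
  obtain C where C: "\<Lambda> = add_mset F C" "D = add_mset (Box y) C" using add2[of "Box y" \<Lambda> F D] rEC.prems nB by auto
  have "deriv c ((L + \<Sigma>) + mset (map Box phis), {#Box y#} + (R + C))"
    by (rule deriv.rEC) (use rEC in auto)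
  then show ?case using C by (simp add: add_mset_commute ac_simps)
next
  case (rNW y \<Sigma> \<Lambda>)
  obtain C where C: "\<Lambda> = add_mset F C" "D = add_mset (Box y) C" using add2[of "Box y" \<Lambda> F D] rNW.prems nB by auto
  then show ?case using rNW.hyps deriv.rNW[of c y "L + \<Sigma>" "R + C"] by (simp add: add_mset_commute ac_simps)
next
  case (rCKCEM ps qs a0 b0)
  have "add_mset (Cond a0 b0) (mset (map condf qs)) = add_mset F D" using rCKCEM.prems by simp
  then have "F \<in># mset (map condf qs)" by (rule add_in) (metis nC)
  then show ?case using nC by (auto simp: condf_def)
next
  case (rCKCEMID ps qs a0 b0)
  have "add_mset (Cond a0 b0) (mset (map condf qs)) = add_mset F D" using rCKCEMID.prems by simp
  then have "F \<in># mset (map condf qs)" by (rule add_in) (metis nC)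
  then show ?case using nC by (auto simp: condf_def)
qed (use nB nC in simp_all)


lemma inv_Rimp: "deriv c (G, add_mset (FImp a b) D) \<Longrightarrow> deriv c (add_mset a G, add_mset b D)"
  using inv_R_gen[of c "(G, add_mset (FImp a b) D)" "FImp a b" D "{#a#}" "{#b#}"] W[of c _ _ "{#a#}" "{#b#}"]
  by (simp add: ac_simps)

lemma inv_Ror: "deriv c (G, add_mset (FOr a b) D) \<Longrightarrow> deriv c (G, add_mset a (add_mset b D))"
  using inv_R_gen[of c "(G, add_mset (FOr a b) D)" "FOr a b" D "{#}" "{#a,b#}"] W[of c _ _ "{#}" "{#a,b#}"]
  by (simp add: ac_simps)

lemma inv_Rbot: "deriv c (G, add_mset Bot D) \<Longrightarrow> deriv c (G, D)"
  using inv_R_gen[of c "(G, add_mset Bot D)" Bot D "{#}" "{#}"]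
  by simp

lemma split_plus: "add_mset x M = A + B \<Longrightarrow> x \<notin># B \<Longrightarrow> \<exists>C. A = add_mset x C \<and> M = C + B"
proof -
  assume h: "add_mset x M = A + B" "x \<notin># B"
  then have "x \<in># A" by (metis add_mset_add_single union_iff union_single_eq_member)
  then have A: "A = add_mset x (A - {#x#})" by simp
  with h(1) have "add_mset x M = add_mset x ((A - {#x#}) + B)" by (metis union_mset_add_mset_left)
  then have "M = (A - {#x#}) + B" by simp
  with A show ?thesis by blast
qed

lemma inv_Limp: "deriv c S \<Longrightarrow> fst S = add_mset (FImp a b) G \<Longrightarrow> deriv c (G, add_mset a (snd S))"
proof (induction arbitrary: G rule: deriv.induct)
  case (ax_atom \<Gamma> p \<Delta>)
  obtain C where "\<Gamma> = add_mset (FImp a b) C" "G = add_mset (Atom p) C" using add2[of "Atom p" \<Gamma> "FImp a b" G] ax_atom.prems by auto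
  then show ?case using deriv.ax_atom[of c C p "add_mset a \<Delta>"] by (simp add: add_mset_commute)
next
  case (ax_bot \<Gamma> \<Delta>)
  obtain C where "\<Gamma> = add_mset (FImp a b) C" "G = add_mset Bot C" using add2[of Bot \<Gamma> "FImp a b" G] ax_bot.prems by auto
  then show ?case using deriv.ax_bot[of c C "add_mset a \<Delta>"] by (simp add: add_mset_commute)
next
  case (L_and \<Gamma> x y \<Delta>)
  obtain C where C: "\<Gamma> = add_mset (FImp a b) C" "G = add_mset (FAnd x y) C" using add2[of "FAnd x y" \<Gamma> "FImp a b" G] L_and.prems by auto
  then show ?case using L_and.IH[of "add_mset x (add_mset y C)"] deriv.L_and[of c C x y "add_mset a \<Delta>"] by (simp add: add_mset_commute)
next
  case (R_and \<Gamma> x \<Delta> y)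
  then show ?case using R_and.IH(1)[of G] R_and.IH(2)[of G] deriv.R_and[of c G x "add_mset a \<Delta>" y] by (simp add: add_mset_commute)
next
  case (L_or \<Gamma> x \<Delta> y)
  obtain C where C: "\<Gamma> = add_mset (FImp a b) C" "G = add_mset (FOr x y) C" using add2[of "FOr x y" \<Gamma> "FImp a b" G] L_or.prems by auto
  then show ?case using L_or.IH(1)[of "add_mset x C"] L_or.IH(2)[of "add_mset y C"] deriv.L_or[of c C x "add_mset a \<Delta>" y] by (simp add: add_mset_commute)
next
  case (R_or \<Gamma> x y \<Delta>)
  then show ?case using R_or.IH[of G] deriv.R_or[of c G x y "add_mset a \<Delta>"] by (simp add: add_mset_commute)
next
  case (L_imp \<Gamma> x \<Delta> y)
  show ?case
  proof (cases "FImp x y = FImp a b \<and> \<Gamma> = G")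
    case True then show ?thesis using L_imp.hyps by simp
  next
    case False
    obtain C where C: "\<Gamma> = add_mset (FImp a b) C" "G = add_mset (FImp x y) C"
      using add2[of "FImp x y" \<Gamma> "FImp a b" G] L_imp.prems False by (cases "FImp x y = FImp a b") auto
    then show ?thesis using L_imp.IH(1)[of C] L_imp.IH(2)[of "add_mset y C"]
      deriv.L_imp[of c C x "add_mset a \<Delta>" y] by (simp add: add_mset_commute)
  qed
next
  case (R_imp \<Gamma> x y \<Delta>)
  then show ?case using R_imp.IH[of "add_mset x G"] deriv.R_imp[of c G x y "add_mset a \<Delta>"] by (simp add: add_mset_commute)
next
  case (LW \<Gamma> \<Delta> x)
  show ?case
  proof (cases "x = FImp a b \<and> \<Gamma> = G")
    case True then show ?thesis using LW.hyps W[of c \<Gamma> \<Delta> "{#}" "{#a#}"] by (simp add: add_mset_commute)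
  next
    case False
    obtain C where C: "\<Gamma> = add_mset (FImp a b) C" "G = add_mset x C" 
      using add2[of x \<Gamma> "FImp a b" G] LW.prems False by (cases "x = FImp a b") auto
    then show ?thesis using LW.IH[of C] LW.hyps
      deriv.LW[of c C "add_mset a \<Delta>" x] by (simp add: add_mset_commute)
  qed
next
  case (RW \<Gamma> \<Delta> x)
  then show ?case using RW.IH[of G] deriv.RW[of c G "add_mset a \<Delta>" x] by (simp add: add_mset_commute)
next
  case (rMC phis y)
  have "FImp a b \<in># mset (map Box phis)" using rMC.prems by (metis fst_conv union_single_eq_member add_mset_add_single)
  then show ?case by auto
next
  case (rEC phis y \<Sigma> \<Lambda>)
  have "add_mset (FImp a b) G = \<Sigma> + mset (map Box phis)" using rEC.prems by simp
  then obtain C where C: "\<Sigma> = add_mset (FImp a b) C" "G = C + mset (map Box phis)"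
    using split_plus[of "FImp a b" G \<Sigma> "mset (map Box phis)"] by auto
  have "deriv c (C + mset (map Box phis), {#Box y#} + add_mset a \<Lambda>)"
    by (rule deriv.rEC) (use rEC in auto)
  then show ?case using C by (simp add: add_mset_commute)
next
  case (rNW y \<Sigma> \<Lambda>)
  then show ?case using rNW.hyps deriv.rNW[of c y G "add_mset a \<Lambda>"] by (simp add: add_mset_commute)
next
  case (rCMC ps a0 b0)
  have "FImp a b \<in># mset (map condf ps)" using rCMC.prems by (metis fst_conv union_single_eq_member add_mset_add_single)
  then show ?case by (auto simp: condf_def)
next
  case (rCKID ps a0 b0)
  have "FImp a b \<in># mset (map condf ps)" using rCKID.prems by (metis fst_conv union_single_eq_member add_mset_add_single)
  then show ?case by (auto simp: condf_def)
next
  case (rCKCEM ps qs a0 b0)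
  have "FImp a b \<in># mset (map condf ps)" using rCKCEM.prems by (metis fst_conv union_single_eq_member add_mset_add_single)
  then show ?case by (auto simp: condf_def)
next
  case (rCKCEMID ps qs a0 b0)
  have "FImp a b \<in># mset (map condf ps)" using rCKCEMID.prems by (metis fst_conv union_single_eq_member add_mset_add_single)
  then show ?case by (auto simp: condf_def)
qed simp_all


fun fimps :: "fm list \<Rightarrow> fm \<Rightarrow> fm" where
  "fimps [] r = r"
| "fimps (g # gs) r = FImp g (fimps gs r)"

fun disj :: "fm list \<Rightarrow> fm" where
  "disj [] = Bot"
| "disj (d # ds) = FOr d (disj ds)"

lemma opp_opp[simp]: "opp (opp t) = t" by (cases t) auto

lemma disjF: "deriv c (G, mset ds + D) \<Longrightarrow> deriv c (G, add_mset (disj ds) D)"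
proof (induction ds arbitrary: D)
  case Nil then show ?case using W[of c G D "{#}" "{#Bot#}"] by simp
next
  case (Cons d ds)
  have "deriv c (G, mset ds + add_mset d D)" using Cons.prems by simp
  then have "deriv c (G, add_mset (disj ds) (add_mset d D))" by (rule Cons.IH)
  then show ?case using deriv.R_or[of c G d "disj ds" D] by (simp add: add_mset_commute)
qed

lemma disjB: "deriv c (G, add_mset (disj ds) D) \<Longrightarrow> deriv c (G, mset ds + D)"
proof (induction ds arbitrary: D)
  case Nil then show ?case using inv_Rbot by simp
next
  case (Cons d ds)
  have "deriv c (G, add_mset (disj ds) (add_mset d D))" 
    using inv_Ror[of c G d "disj ds" D] Cons.prems by (simp add: add_mset_commute)
  then show ?case using Cons.IH[of "add_mset d D"] by simp
qed

lemma fimpsF: "deriv c (G + mset gs, mset ds + D) \<Longrightarrow> deriv c (G, add_mset (fimps gs (disj ds)) D)"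
proof (induction gs arbitrary: G)
  case Nil then show ?case using disjF by simp
next
  case (Cons g gs)
  have "deriv c (add_mset g G + mset gs, mset ds + D)" using Cons.prems by simp
  then have "deriv c (add_mset g G, add_mset (fimps gs (disj ds)) D)" by (rule Cons.IH)
  then show ?case using deriv.R_imp[of c G g "fimps gs (disj ds)" D] by simp
qed

lemma fimpsB: "deriv c (G, add_mset (fimps gs (disj ds)) D) \<Longrightarrow> deriv c (G + mset gs, mset ds + D)"
proof (induction gs arbitrary: G)
  case Nil then show ?case using disjB by simp
next
  case (Cons g gs)
  have "deriv c (add_mset g G, add_mset (fimps gs (disj ds)) D)" 
    using inv_Rimp Cons.prems by simp
  then show ?case using Cons.IH[of "add_mset g G"] by simp
qed

lemma inL_fimps: "inL c (fimps gs r) \<longleftrightarrow> (\<forall>g\<in>set gs. inL c g) \<and> inL c r"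
  by (induction gs) (auto simp: inL_def)

lemma inL_disj: "inL c (disj ds) \<longleftrightarrow> (\<forall>d\<in>set ds. inL c d)"
  by (induction ds) (auto simp: inL_def)

lemma pvars_fimps: "pvars t (fimps gs r) = (\<Union>g\<in>set gs. pvars (opp t) g) \<union> pvars t r"
  by (induction gs) auto

lemma pvars_disj: "pvars t (disj ds) = (\<Union>d\<in>set ds. pvars t d)"
  by (induction ds) auto

lemma spvars_enc: "pvars t (fimps gs (disj ds)) = spvars t (mset gs, mset ds)"
  by (simp add: pvars_fimps pvars_disj spvars_def)

lemma allvars_enc: "allvars (fimps gs (disj ds)) = sallvars (mset gs, mset ds)"
  by (simp add: allvars_def sallvars_def spvars_enc)

lemma inL_enc: "seqL c (mset gs, mset ds) \<Longrightarrow> inL c (fimps gs (disj ds))"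
  by (auto simp: seqL_def inL_fimps inL_disj)

lemma inL_imp[simp]: "inL c (FImp x y) \<longleftrightarrow> inL c x \<and> inL c y" by (simp add: inL_def)
lemma inL_bot[simp]: "inL c Bot" by (simp add: inL_def)

lemma allvars_imp_bot[simp]: "allvars (FImp x Bot) = allvars x"
  by (cases x; auto simp: allvars_def; metis opp.simps pol.exhaust)

lemma sallvars_single: "sallvars ({#x#}, {#}) = allvars x" "sallvars ({#}, {#x#}) = allvars x"
  by (auto simp: sallvars_def spvars_def allvars_def)

lemma pvars_imp_bot[simp]: "pvars t (FImp x Bot) = pvars (opp t) x" by simp


lemma seqL_simp[simp]: "seqL c (G, D) \<longleftrightarrow> (\<forall>a\<in>#G. inL c a) \<and> (\<forall>a\<in>#D. inL c a)"
  by (auto simp: seqL_def)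

lemma spvars_single[simp]: "spvars t ({#x#}, {#}) = pvars (opp t) x" "spvars t ({#}, {#x#}) = pvars t x"
  by (auto simp: spvars_def)

lemma sdot_simp[simp]: "sdot (A, B) (C, D) = (A + C, B + D)" by (simp add: sdot_def)

lemma ULIP_c2l: "ULIP_calc c \<Longrightarrow> ULIP_logic c"
  unfolding ULIP_logic_def
proof (intro allI impI)
  fix \<phi> p s assume phi: "inL c \<phi>"
  assume U: "ULIP_calc c"
  obtain \<theta> where t1: "inL c \<theta>" "p \<notin> pvars s \<theta>" "\<forall>t. pvars t \<theta> \<subseteq> pvars t \<phi>"
    "deriv c ({#\<theta>#}, {#\<phi>#})"
    and t2: "\<And>\<Gamma> \<Delta>. seqL c (\<Gamma>, \<Delta>) \<Longrightarrow> p \<notin> spvars (opp s) (\<Gamma>, \<Delta>)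
          \<Longrightarrow> deriv c (\<Gamma>, add_mset \<phi> \<Delta>) \<Longrightarrow> deriv c (\<Gamma>, {#\<theta>#} + \<Delta>)"
    using U[unfolded ULIP_calc_def, rule_format, of "({#}, {#\<phi>#})" p s] phi by auto
  obtain \<theta>2 where u1: "inL c \<theta>2" "p \<notin> pvars (opp s) \<theta>2" "\<forall>t. pvars t \<theta>2 \<subseteq> pvars (opp t) \<phi>"
    "deriv c ({#\<phi>, \<theta>2#}, {#})"
    and u2: "\<And>\<Gamma> \<Delta>. seqL c (\<Gamma>, \<Delta>) \<Longrightarrow> p \<notin> spvars (opp (opp s)) (\<Gamma>, \<Delta>)
          \<Longrightarrow> deriv c (add_mset \<phi> \<Gamma>, \<Delta>) \<Longrightarrow> deriv c (\<Gamma>, {#\<theta>2#} + \<Delta>)"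
    using U[unfolded ULIP_calc_def, rule_format, of "({#\<phi>#}, {#})" p "opp s"] phi by (auto simp: add_mset_commute)
  show "\<exists>A E. inL c A \<and> inL c E \<and> p \<notin> pvars s A \<and> p \<notin> pvars s E
     \<and> (\<forall>t. pvars t A \<subseteq> pvars t \<phi>) \<and> (\<forall>t. pvars t E \<subseteq> pvars t \<phi>)
     \<and> FImp A \<phi> \<in> logic c
     \<and> (\<forall>\<psi>. inL c \<psi> \<longrightarrow> p \<notin> pvars s \<psi> \<longrightarrow> FImp \<psi> \<phi> \<in> logic c \<longrightarrow> FImp \<psi> A \<in> logic c)
     \<and> FImp \<phi> E \<in> logic c
     \<and> (\<forall>\<psi>. inL c \<psi> \<longrightarrow> p \<notin> pvars s \<psi> \<longrightarrow> FImp \<phi> \<psi> \<in> logic c \<longrightarrow> FImp E \<psi> \<in> logic c)"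
  proof (intro exI conjI allI impI)
    show "inL c \<theta>" "inL c (FImp \<theta>2 Bot)" "p \<notin> pvars s \<theta>" using t1 u1 by auto
    show "p \<notin> pvars s (FImp \<theta>2 Bot)" using u1 by simp
    show "pvars t \<theta> \<subseteq> pvars t \<phi>" for t using t1 by auto
    show "pvars t (FImp \<theta>2 Bot) \<subseteq> pvars t \<phi>" for t using u1(3) by (metis opp_opp pvars_imp_bot)
    show "FImp \<theta> \<phi> \<in> logic c" using deriv.R_imp[of c "{#}" \<theta> \<phi> "{#}"] t1 phi by (simp add: logic_def)
    show "FImp \<psi> \<theta> \<in> logic c" if "inL c \<psi>" "p \<notin> pvars s \<psi>" "FImp \<psi> \<phi> \<in> logic c" for \<psi>
    proof -
      have "deriv c ({#\<psi>#}, {#\<phi>#})" using that inv_Rimp[of c "{#}" \<psi> \<phi> "{#}"] by (simp add: logic_def)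
      then have "deriv c ({#\<psi>#}, {#\<theta>#})" using t2[of "{#\<psi>#}" "{#}"] that by simp
      then show ?thesis using deriv.R_imp[of c "{#}" \<psi> \<theta> "{#}"] that t1 by (simp add: logic_def)
    qed
    show "FImp \<phi> (FImp \<theta>2 Bot) \<in> logic c"
    proof -
      have "deriv c ({#\<phi>, \<theta>2#}, {#Bot#})" using W[OF u1(4), of "{#}" "{#Bot#}"] by simp
      then have "deriv c ({#\<phi>#}, {#FImp \<theta>2 Bot#})" using deriv.R_imp[of c "{#\<phi>#}" \<theta>2 Bot "{#}"] by (simp add: add_mset_commute)
      then show ?thesis using deriv.R_imp[of c "{#}" \<phi> "FImp \<theta>2 Bot" "{#}"] phi u1 by (simp add: logic_def)
    qed
    show "FImp (FImp \<theta>2 Bot) \<psi> \<in> logic c" if "inL c \<psi>" "p \<notin> pvars s \<psi>" "FImp \<phi> \<psi> \<in> logic c" for \<psi>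
    proof -
      have "deriv c ({#\<phi>#}, {#\<psi>#})" using that inv_Rimp[of c "{#}" \<phi> \<psi> "{#}"] by (simp add: logic_def)
      then have "deriv c ({#}, {#\<theta>2#} + {#\<psi>#})" using u2[of "{#}" "{#\<psi>#}"] that by simp
      moreover have "deriv c ({#} + {#Bot#}, {#\<psi>#})" by (rule deriv.ax_bot)
      ultimately have "deriv c ({#} + {#FImp \<theta>2 Bot#}, {#\<psi>#})" by (rule deriv.L_imp)
      then show ?thesis using deriv.R_imp[of c "{#}" "FImp \<theta>2 Bot" \<psi> "{#}"] that u1 by (simp add: logic_def)
    qed
  qed
qed

lemma ULIP_l2c: "ULIP_logic c \<Longrightarrow> ULIP_calc c"
  unfolding ULIP_calc_def
proof (intro allI impI)
  fix S p s assume U: "ULIP_logic c" and sS: "seqL c S"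
  obtain gs ds where gd: "S = (mset gs, mset ds)" by (metis ex_mset prod.collapse)
  define \<phi> where "\<phi> = fimps gs (disj ds)"
  have phi: "inL c \<phi>" using inL_enc sS gd \<phi>_def by simp
  obtain A where A: "inL c A" "p \<notin> pvars s A" "\<forall>t. pvars t A \<subseteq> pvars t \<phi>" "FImp A \<phi> \<in> logic c"
     "\<And>\<psi>. inL c \<psi> \<Longrightarrow> p \<notin> pvars s \<psi> \<Longrightarrow> FImp \<psi> \<phi> \<in> logic c \<Longrightarrow> FImp \<psi> A \<in> logic c"
    using U[unfolded ULIP_logic_def, rule_format, OF phi, of p s] by blast
  show "\<exists>\<theta>. inL c \<theta> \<and> p \<notin> pvars s \<theta>
     \<and> (\<forall>t. pvars t \<theta> \<subseteq> spvars t S)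
     \<and> deriv c (sdot S ({#\<theta>#}, {#}))
     \<and> (\<forall>\<Gamma> \<Delta>. seqL c (\<Gamma>, \<Delta>) \<longrightarrow> p \<notin> spvars (opp s) (\<Gamma>, \<Delta>)
          \<longrightarrow> deriv c (sdot S (\<Gamma>, \<Delta>)) \<longrightarrow> deriv c (\<Gamma>, {#\<theta>#} + \<Delta>))"
  proof (intro exI conjI allI impI)
    show "inL c A" "p \<notin> pvars s A" using A by auto
    show "pvars t A \<subseteq> spvars t S" for t using A(3) gd spvars_enc \<phi>_def by auto
    have "deriv c ({#A#}, {#\<phi>#})" using A(4) inv_Rimp[of c "{#}" A \<phi> "{#}"] by (simp add: logic_def)
    then have "deriv c ({#A#} + mset gs, mset ds + {#})" using fimpsB[of c "{#A#}" gs ds "{#}"] \<phi>_def by simp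
    then show "deriv c (sdot S ({#A#}, {#}))" using gd by (simp add: ac_simps)
    fix \<Gamma> \<Delta> assume sG: "seqL c (\<Gamma>, \<Delta>)" and pG: "p \<notin> spvars (opp s) (\<Gamma>, \<Delta>)"
      and dG: "deriv c (sdot S (\<Gamma>, \<Delta>))"
    obtain hs es where he: "\<Gamma> = mset hs" "\<Delta> = mset es" by (metis ex_mset)
    define \<phi>T where "\<phi>T = fimps hs (disj es)"
    define \<psi> where "\<psi> = FImp \<phi>T Bot"
    have psi: "inL c \<psi>" using inL_enc sG he \<phi>T_def \<psi>_def by simp
    have ppsi: "p \<notin> pvars s \<psi>" using pG he \<phi>T_def \<psi>_def spvars_enc by simp
    have "deriv c (mset gs + mset hs, mset es + mset ds)" using dG gd he by (simp add: ac_simps)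
    then have "deriv c (mset gs, add_mset \<phi>T (mset ds))" using fimpsF \<phi>T_def by simp
    then have "deriv c (mset gs, {#\<phi>T#} + mset ds)" by simp
    moreover have "deriv c (mset gs + {#Bot#}, mset ds)" by (rule deriv.ax_bot)
    ultimately have "deriv c (mset gs + {#\<psi>#}, mset ds)" unfolding \<psi>_def by (rule deriv.L_imp)
    then have "deriv c ({#\<psi>#} + mset gs, mset ds + {#})" by (simp add: ac_simps)
    then have "deriv c ({#\<psi>#}, {#\<phi>#})" using fimpsF[of c "{#\<psi>#}" gs ds "{#}"] \<phi>_def by simp
    then have "deriv c ({#}, {#FImp \<psi> \<phi>#})" using deriv.R_imp[of c "{#}" \<psi> \<phi> "{#}"] by simp
    then have "FImp \<psi> A \<in> logic c" using A(5)[OF psi ppsi] psi phi by (simp add: logic_def)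
    then have "deriv c ({#\<psi>#}, {#A#})" using inv_Rimp[of c "{#}" \<psi> A "{#}"] by (simp add: logic_def)
    then have "deriv c ({#}, add_mset \<phi>T {#A#})" using inv_Limp[of c "({#\<psi>#}, {#A#})" \<phi>T Bot "{#}"] \<psi>_def by simp
    then have "deriv c (mset hs, mset es + {#A#})" using fimpsB[of c "{#}" hs es "{#A#}"] \<phi>T_def by simp
    then show "deriv c (\<Gamma>, {#A#} + \<Delta>)" using he by (simp add: ac_simps)
  qed
qed


lemma UIP_c2l: "UIP_calc c \<Longrightarrow> UIP_logic c"
  unfolding UIP_logic_def
proof (intro allI impI)
  fix \<phi> p assume phi: "inL c \<phi>"
  assume U: "UIP_calc c"
  obtain \<theta> where t1: "inL c \<theta>" "p \<notin> allvars \<theta>" "allvars \<theta> \<subseteq> allvars \<phi>"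
    "deriv c ({#\<theta>#}, {#\<phi>#})"
    and t2: "\<And>\<Gamma> \<Delta>. seqL c (\<Gamma>, \<Delta>) \<Longrightarrow> p \<notin> sallvars (\<Gamma>, \<Delta>)
          \<Longrightarrow> deriv c (\<Gamma>, add_mset \<phi> \<Delta>) \<Longrightarrow> deriv c (\<Gamma>, {#\<theta>#} + \<Delta>)"
    using U[unfolded UIP_calc_def, rule_format, of "({#}, {#\<phi>#})" p] phi by (auto simp: sallvars_single)
  obtain \<theta>2 where u1: "inL c \<theta>2" "p \<notin> allvars \<theta>2" "allvars \<theta>2 \<subseteq> allvars \<phi>"
    "deriv c ({#\<phi>, \<theta>2#}, {#})"
    and u2: "\<And>\<Gamma> \<Delta>. seqL c (\<Gamma>, \<Delta>) \<Longrightarrow> p \<notin> sallvars (\<Gamma>, \<Delta>)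
          \<Longrightarrow> deriv c (add_mset \<phi> \<Gamma>, \<Delta>) \<Longrightarrow> deriv c (\<Gamma>, {#\<theta>2#} + \<Delta>)"
    using U[unfolded UIP_calc_def, rule_format, of "({#\<phi>#}, {#})" p] phi by (auto simp: add_mset_commute sallvars_single)
  show "\<exists>A E. inL c A \<and> inL c E \<and> p \<notin> allvars A \<and> p \<notin> allvars E
     \<and> allvars A \<subseteq> allvars \<phi> \<and> allvars E \<subseteq> allvars \<phi>
     \<and> FImp A \<phi> \<in> logic c
     \<and> (\<forall>\<psi>. inL c \<psi> \<longrightarrow> p \<notin> allvars \<psi> \<longrightarrow> FImp \<psi> \<phi> \<in> logic c \<longrightarrow> FImp \<psi> A \<in> logic c)
     \<and> FImp \<phi> E \<in> logic c
     \<and> (\<forall>\<psi>. inL c \<psi> \<longrightarrow> p \<notin> allvars \<psi> \<longrightarrow> FImp \<phi> \<psi> \<in> logic c \<longrightarrow> FImp E \<psi> \<in> logic c)"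
  proof (intro exI conjI allI impI)
    show "inL c \<theta>" "inL c (FImp \<theta>2 Bot)" "p \<notin> allvars \<theta>" using t1 u1 by auto
    show "p \<notin> allvars (FImp \<theta>2 Bot)" using u1 by simp
    show "allvars \<theta> \<subseteq> allvars \<phi>" using t1 by auto
    show "allvars (FImp \<theta>2 Bot) \<subseteq> allvars \<phi>" using u1(3) by simp
    show "FImp \<theta> \<phi> \<in> logic c" using deriv.R_imp[of c "{#}" \<theta> \<phi> "{#}"] t1 phi by (simp add: logic_def)
    show "FImp \<psi> \<theta> \<in> logic c" if "inL c \<psi>" "p \<notin> allvars \<psi>" "FImp \<psi> \<phi> \<in> logic c" for \<psi>
    proof -
      have "deriv c ({#\<psi>#}, {#\<phi>#})" using that inv_Rimp[of c "{#}" \<psi> \<phi> "{#}"] by (simp add: logic_def)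
      then have "deriv c ({#\<psi>#}, {#\<theta>#})" using t2[of "{#\<psi>#}" "{#}"] that by (simp add: sallvars_single)
      then show ?thesis using deriv.R_imp[of c "{#}" \<psi> \<theta> "{#}"] that t1 by (simp add: logic_def)
    qed
    show "FImp \<phi> (FImp \<theta>2 Bot) \<in> logic c"
    proof -
      have "deriv c ({#\<phi>, \<theta>2#}, {#Bot#})" using W[OF u1(4), of "{#}" "{#Bot#}"] by simp
      then have "deriv c ({#\<phi>#}, {#FImp \<theta>2 Bot#})" using deriv.R_imp[of c "{#\<phi>#}" \<theta>2 Bot "{#}"] by (simp add: add_mset_commute)
      then show ?thesis using deriv.R_imp[of c "{#}" \<phi> "FImp \<theta>2 Bot" "{#}"] phi u1 by (simp add: logic_def)
    qed
    show "FImp (FImp \<theta>2 Bot) \<psi> \<in> logic c" if "inL c \<psi>" "p \<notin> allvars \<psi>" "FImp \<phi> \<psi> \<in> logic c" for \<psi>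
    proof -
      have "deriv c ({#\<phi>#}, {#\<psi>#})" using that inv_Rimp[of c "{#}" \<phi> \<psi> "{#}"] by (simp add: logic_def)
      then have "deriv c ({#}, {#\<theta>2#} + {#\<psi>#})" using u2[of "{#}" "{#\<psi>#}"] that by (simp add: sallvars_single)
      moreover have "deriv c ({#} + {#Bot#}, {#\<psi>#})" by (rule deriv.ax_bot)
      ultimately have "deriv c ({#} + {#FImp \<theta>2 Bot#}, {#\<psi>#})" by (rule deriv.L_imp)
      then show ?thesis using deriv.R_imp[of c "{#}" "FImp \<theta>2 Bot" \<psi> "{#}"] that u1 by (simp add: logic_def)
    qed
  qed
qed

lemma UIP_l2c: "UIP_logic c \<Longrightarrow> UIP_calc c"
  unfolding UIP_calc_def
proof (intro allI impI)
  fix S p assume U: "UIP_logic c" and sS: "seqL c S"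
  obtain gs ds where gd: "S = (mset gs, mset ds)" by (metis ex_mset prod.collapse)
  define \<phi> where "\<phi> = fimps gs (disj ds)"
  have phi: "inL c \<phi>" using inL_enc sS gd \<phi>_def by simp
  obtain A where A: "inL c A" "p \<notin> allvars A" "allvars A \<subseteq> allvars \<phi>" "FImp A \<phi> \<in> logic c"
     "\<And>\<psi>. inL c \<psi> \<Longrightarrow> p \<notin> allvars \<psi> \<Longrightarrow> FImp \<psi> \<phi> \<in> logic c \<Longrightarrow> FImp \<psi> A \<in> logic c"
    using U[unfolded UIP_logic_def, rule_format, OF phi, of p] by blast
  show "\<exists>\<theta>. inL c \<theta> \<and> p \<notin> allvars \<theta>
     \<and> allvars \<theta> \<subseteq> sallvars S
     \<and> deriv c (sdot S ({#\<theta>#}, {#}))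
     \<and> (\<forall>\<Gamma> \<Delta>. seqL c (\<Gamma>, \<Delta>) \<longrightarrow> p \<notin> sallvars (\<Gamma>, \<Delta>)
          \<longrightarrow> deriv c (sdot S (\<Gamma>, \<Delta>)) \<longrightarrow> deriv c (\<Gamma>, {#\<theta>#} + \<Delta>))"
  proof (intro exI conjI allI impI)
    show "inL c A" "p \<notin> allvars A" using A by auto
    show "allvars A \<subseteq> sallvars S" using A(3) gd allvars_enc \<phi>_def by auto
    have "deriv c ({#A#}, {#\<phi>#})" using A(4) inv_Rimp[of c "{#}" A \<phi> "{#}"] by (simp add: logic_def)
    then have "deriv c ({#A#} + mset gs, mset ds + {#})" using fimpsB[of c "{#A#}" gs ds "{#}"] \<phi>_def by simp
    then show "deriv c (sdot S ({#A#}, {#}))" using gd by (simp add: ac_simps)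
    fix \<Gamma> \<Delta> assume sG: "seqL c (\<Gamma>, \<Delta>)" and pG: "p \<notin> sallvars (\<Gamma>, \<Delta>)"
      and dG: "deriv c (sdot S (\<Gamma>, \<Delta>))"
    obtain hs es where he: "\<Gamma> = mset hs" "\<Delta> = mset es" by (metis ex_mset)
    define \<phi>T where "\<phi>T = fimps hs (disj es)"
    define \<psi> where "\<psi> = FImp \<phi>T Bot"
    have psi: "inL c \<psi>" using inL_enc sG he \<phi>T_def \<psi>_def by simp
    have ppsi: "p \<notin> allvars \<psi>" using pG he \<phi>T_def \<psi>_def allvars_enc by simp
    have "deriv c (mset gs + mset hs, mset es + mset ds)" using dG gd he by (simp add: ac_simps)
    then have "deriv c (mset gs, add_mset \<phi>T (mset ds))" using fimpsF \<phi>T_def by simp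
    then have "deriv c (mset gs, {#\<phi>T#} + mset ds)" by simp
    moreover have "deriv c (mset gs + {#Bot#}, mset ds)" by (rule deriv.ax_bot)
    ultimately have "deriv c (mset gs + {#\<psi>#}, mset ds)" unfolding \<psi>_def by (rule deriv.L_imp)
    then have "deriv c ({#\<psi>#} + mset gs, mset ds + {#})" by (simp add: ac_simps)
    then have "deriv c ({#\<psi>#}, {#\<phi>#})" using fimpsF[of c "{#\<psi>#}" gs ds "{#}"] \<phi>_def by simp
    then have "deriv c ({#}, {#FImp \<psi> \<phi>#})" using deriv.R_imp[of c "{#}" \<psi> \<phi> "{#}"] by simp
    then have "FImp \<psi> A \<in> logic c" using A(5)[OF psi ppsi] psi phi by (simp add: logic_def)
    then have "deriv c ({#\<psi>#}, {#A#})" using inv_Rimp[of c "{#}" \<psi> A "{#}"] by (simp add: logic_def)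
    then have "deriv c ({#}, add_mset \<phi>T {#A#})" using inv_Limp[of c "({#\<psi>#}, {#A#})" \<phi>T Bot "{#}"] \<psi>_def by simp
    then have "deriv c (mset hs, mset es + {#A#})" using fimpsB[of c "{#}" hs es "{#A#}"] \<phi>T_def by simp
    then show "deriv c (\<Gamma>, {#A#} + \<Delta>)" using he by (simp add: ac_simps)
  qed
qed

theorem mainTheorem4:
  fixes G :: calc
  shows "(ULIP_calc G \<longleftrightarrow> ULIP_logic G) \<and> (UIP_calc G \<longleftrightarrow> UIP_logic G)"
  using ULIP_c2l ULIP_l2c UIP_c2l UIP_l2c by blast

end
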